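(* Let $\pi\colon\mathsf{States}\to\mathbb{R}_{\ge0}$ be a potential function. For every program $C$, every $X\in\mathbb{A}_\pi$ and every constant runtime $c\in\mathbb{T}$ (i.e. $c$ is a constant function $\mathsf{States}\to[0,\infty]$), $$\mathsf{aert}_\pi[\![C]\!](X+c)\;\preceq\;\mathsf{aert}_\pi[\![C]\!](X)+c .$$
   Context: States and programs. Fix a finite set $\mathrm{Vars}$ of variables; values are $\mathbb{N}$, locations are $\mathbb{N}_{>0}$. A stack is $s\colon \mathrm{Vars}\to\mathbb{N}$; a heap is a partial map $h$ from a finite set $\mathrm{dom}(h)\subseteq\mathbb{N}_{>0}$ to $\mathbb{N}$. $h_1\perp h_2$ means disjoint domains; then $h_1\star h_2$ is their union; $h_\emptyset$ is the empty heap. $\mathsf{States}$ is the set of pairs $(s,h)$. $s(e)$ is the value of a (heap-independent) arithmetic expression $e$ under $s$, $s\models\varphi$ means the Boolean expression $\varphi$ holds under $s$, $s[x\mapsto v]$ is the updated stack. Programs are generated by $C ::= \mathtt{tick}(e) \mid x:=e \mid x:=\mathtt{alloc}(e) \mid \langle e\rangle:=e' \mid x:=\langle e\rangle \mid \mathtt{free}(e) \mid \{C\}[p]\{C\} \mid \mathtt{if}(\varphi)\{C\}\mathtt{else}\{C\} \mid C;C \mid \mathtt{while}(\varphi)\{C\}$, where $p$ is an expression with $s(p)\in[0,1]\cap\mathbb{Q}$ for all $s$. The statements other than tick, probabilistic choice, conditional, sequencing and loops are called atomic. Runtimes. $\mathbb{T}$ is the set of functions $\mathsf{States}\to[0,\infty]$,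 ordered pointwise by $\preceq$; arithmetic is pointwise with $0\cdot\infty=0$. $[\varphi]$ is the $0/1$-valued Iverson bracket. Truncated subtraction: $a\dot- b=\max(a-b,0)$, $\infty\dot- b=\infty$ for finite $b$, $a\dot-\infty=0$. $(f\oplus g)(s,h)=\min\{f(s,h_1)+g(s,h_2)\mid h=h_1\star h_2\}$; $(f \mathbin{-\!\!\ominus} g)(s,h)=\sup\{g(s,h\star h')\dot- f(s,h')\mid h'\perp h\}$; $(\inf y\colon f)(s,h)=\inf_{v\in\mathbb{N}} f(s[y\mapsto v],h)$, $(\sup y\colon f)(s,h)=\sup_{v\in\mathbb{N}}f(s[y\mapsto v],h)$; $f[x/e](s,h)=f(s[x\mapsto s(e)],h)$. $\mathsf{tm}(e)(s,h)=s(e)$ if $h=h_\emptyset$, else $\infty$; $[e\mapsto e'](s,h)=0$ if $\mathrm{dom}(h)=\{s(e)\}$ and $h(s(e))=s(e')$, else $\infty$; $[e\mapsto -](s,h)=0$ if $\mathrm{dom}(h)=\{s(e)\}$, else $\infty$; $\bigoplus_{i=1}^{e} f_i$ is the separating sum over $i=1,\dots,s(e)$ (empty one: $[\mathsf{emp}]$, which is $0$ if $h=h_\emptyset$, else $\infty$). $\mathsf{ert}[\![C]\!]\colon\mathbb{T}\to\mathbb{T}$ (with $v$ fresh): $\mathsf{ert}[\![\mathtt{tick}(e)]\!](f)=\mathsf{tm}(e)\oplus f$; $\mathsf{ert}[\![x:=e]\!](f)=f[x/e]$; $\mathsf{ert}[\![x:=\mathtt{alloc}(e)]\!](f)=\sup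 v\colon (\bigoplus_{i=1}^{e}[v+i-1\mapsto 0])\mathbin{-\!\!\ominus} f[x/v]$; $\mathsf{ert}[\![\langle e\rangle:=e']\!](f)=[e\mapsto-]\oplus([e\mapsto e']\mathbin{-\!\!\ominus} f)$; $\mathsf{ert}[\![x:=\langle e\rangle]\!](f)=\inf v\colon [e\mapsto v]\oplus([e\mapsto v]\mathbin{-\!\!\ominus} f[x/v])$; $\mathsf{ert}[\![\mathtt{free}(e)]\!](f)=[e\mapsto-]\oplus f$; $\mathsf{ert}[\![C_1;C_2]\!](f)=\mathsf{ert}[\![C_1]\!](\mathsf{ert}[\![C_2]\!](f))$; conditional: $[\varphi]\cdot\mathsf{ert}[\![C_1]\!](f)+[\neg\varphi]\cdot\mathsf{ert}[\![C_2]\!](f)$; probabilistic choice: $p\cdot\mathsf{ert}[\![C_1]\!](f)+(1-p)\cdot\mathsf{ert}[\![C_2]\!](f)$; $\mathsf{ert}[\![\mathtt{while}(\varphi)\{C\}]\!](f)=\mathrm{lfp}\, g.\ [\neg\varphi]\cdot f+[\varphi]\cdot\mathsf{ert}[\![C]\!](g)$. Amortized runtimes. A potential function is $\pi\colon\mathsf{States}\to\mathbb{R}_{\ge0}$. $\mathbb{A}_\pi=\{X\colon\mathsf{States}\to\mathbb{R}\cup\{\infty\}\mid -\pi\le X\}$, ordered pointwise (complete lattice, least element $-\pi$). $\mathsf{aert}_\pi[\![C]\!]\colon\mathbb{A}_\pi\to\mathbb{A}_\pi$: $\mathsf{aert}_\pi[\![\mathtt{tick}(e)]\!](X)=e+X$;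 for atomic $C$ other than tick, $\mathsf{aert}_\pi[\![C]\!](X)=\mathsf{ert}[\![C]\!](X+\pi)-\pi$; sequencing by composition; conditional $[\varphi]\cdot\mathsf{aert}_\pi[\![C_1]\!](X)+[\neg\varphi]\cdot\mathsf{aert}_\pi[\![C_2]\!](X)$; probabilistic choice $p\cdot\mathsf{aert}_\pi[\![C_1]\!](X)+(1-p)\cdot\mathsf{aert}_\pi[\![C_2]\!](X)$; $\mathsf{aert}_\pi[\![\mathtt{while}(\varphi)\{C'\}]\!](X)=\mathrm{lfp}\,Y.\ [\neg\varphi]\cdot X+[\varphi]\cdot\mathsf{aert}_\pi[\![C']\!](Y)$ in $(\mathbb{A}_\pi,\preceq)$. *)

theory Defs
  imports Complex_Main "HOL-Library.Extended_Nonnegative_Real" "HOL-Library.Extended_Real"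
begin

typedef heap = "{h :: nat \<Rightarrow> nat option. finite (dom h) \<and> 0 \<notin> dom h}"
  morphisms hmap Heap
  by (rule exI[of _ Map.empty]) auto

definition hdom :: "heap \<Rightarrow> nat set" where
  "hdom h = dom (hmap h)"

definition hdisj :: "heap \<Rightarrow> heap \<Rightarrow> bool" where
  "hdisj h1 h2 \<longleftrightarrow> hdom h1 \<inter> hdom h2 = {}"

definition hunion :: "heap \<Rightarrow> heap \<Rightarrow> heap" where
  "hunion h1 h2 = Heap (hmap h1 ++ hmap h2)"

definition hemp :: heap where
  "hemp = Heap Map.empty"

type_synonym 'v stack = "'v \<Rightarrow> nat"
type_synonym 'v state = "'v stack \<times> heap"
type_synonym 'v rt = "'v state \<Rightarrow> ennreal"
type_synonym 'v art = "'v state \<Rightarrow> ereal"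

text \<open>Expressions are heap-independent: arithmetic expressions are functions of the stack
  into nat, Boolean expressions functions into bool, probabilities functions into rat.\<close>
datatype 'v prog =
    Tick "'v stack \<Rightarrow> nat"
  | Assign 'v "'v stack \<Rightarrow> nat"
  | Alloc 'v "'v stack \<Rightarrow> nat"
  | Store "'v stack \<Rightarrow> nat" "'v stack \<Rightarrow> nat"
  | Load 'v "'v stack \<Rightarrow> nat"
  | Free "'v stack \<Rightarrow> nat"
  | PChoice "'v prog" "'v stack \<Rightarrow> rat" "'v prog"
  | If "'v stack \<Rightarrow> bool" "'v prog" "'v prog"
  | Seq "'v prog" "'v prog"
  | While "'v stack \<Rightarrow> bool" "'v prog"

primrec wf_prog :: "'v prog \<Rightarrow> bool" where
  "wf_prog (Tick e) = True"
| "wf_prog (Assign x e) = True"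
| "wf_prog (Alloc x e) = True"
| "wf_prog (Store e e') = True"
| "wf_prog (Load x e) = True"
| "wf_prog (Free e) = True"
| "wf_prog (PChoice C1 p C2) = ((\<forall>s. 0 \<le> p s \<and> p s \<le> 1) \<and> wf_prog C1 \<and> wf_prog C2)"
| "wf_prog (If b C1 C2) = (wf_prog C1 \<and> wf_prog C2)"
| "wf_prog (Seq C1 C2) = (wf_prog C1 \<and> wf_prog C2)"
| "wf_prog (While b C) = wf_prog C"

text \<open>Truncated subtraction on [0,\<infinity>]: a - \<infinity> = 0, \<infinity> - b = \<infinity> for finite b.\<close>
definition tsub :: "ennreal \<Rightarrow> ennreal \<Rightarrow> ennreal" where
  "tsub a b = (if b = top then 0 else if a = top then top else a - b)"

definition sepsum :: "'v rt \<Rightarrow> 'v rt \<Rightarrow> 'v rt" where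
  "sepsum f g = (\<lambda>(s, h). INF p \<in> {(h1, h2). hdisj h1 h2 \<and> hunion h1 h2 = h}.
                    f (s, fst p) + g (s, snd p))"

definition sepimp :: "'v rt \<Rightarrow> 'v rt \<Rightarrow> 'v rt" where
  "sepimp f g = (\<lambda>(s, h). SUP h' \<in> {h'. hdisj h' h}. tsub (g (s, hunion h h')) (f (s, h')))"

definition tm :: "('v stack \<Rightarrow> nat) \<Rightarrow> 'v rt" where
  "tm e = (\<lambda>(s, h). if h = hemp then ennreal (real (e s)) else top)"

definition emp :: "'v rt" where
  "emp = (\<lambda>(s, h). if h = hemp then 0 else top)"

definition ptv :: "nat \<Rightarrow> nat \<Rightarrow> 'v rt" where
  "ptv l v = (\<lambda>(s, h). if hdom h = {l} \<and> hmap h l = Some v then 0 else top)"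

definition ptany :: "nat \<Rightarrow> 'v rt" where
  "ptany l = (\<lambda>(s, h). if hdom h = {l} then 0 else top)"

primrec bigsep :: "nat \<Rightarrow> (nat \<Rightarrow> 'v rt) \<Rightarrow> 'v rt" where
  "bigsep 0 F = emp"
| "bigsep (Suc n) F = sepsum (bigsep n F) (F (Suc n))"

primrec ert :: "'v prog \<Rightarrow> 'v rt \<Rightarrow> 'v rt" where
  "ert (Tick e) f = sepsum (tm e) f"
| "ert (Assign x e) f = (\<lambda>(s, h). f (s(x := e s), h))"
| "ert (Alloc x e) f = (\<lambda>(s, h). SUP v. sepimp (bigsep (e s) (\<lambda>i. ptv (v + i - 1) 0))
                                            (\<lambda>(s', h'). f (s'(x := v), h')) (s, h))"
| "ert (Store e e') f = sepsum (\<lambda>(s, h). ptany (e s) (s, h))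
                               (sepimp (\<lambda>(s, h). ptv (e s) (e' s) (s, h)) f)"
| "ert (Load x e) f = (\<lambda>(s, h). INF v. sepsum (\<lambda>(s', h'). ptv (e s') v (s', h'))
                         (sepimp (\<lambda>(s', h'). ptv (e s') v (s', h'))
                                 (\<lambda>(s', h'). f (s'(x := v), h'))) (s, h))"
| "ert (Free e) f = sepsum (\<lambda>(s, h). ptany (e s) (s, h)) f"
| "ert (PChoice C1 p C2) f = (\<lambda>\<sigma>. ennreal (real_of_rat (p (fst \<sigma>))) * ert C1 f \<sigma>
                                 + ennreal (1 - real_of_rat (p (fst \<sigma>))) * ert C2 f \<sigma>)"
| "ert (If b C1 C2) f = (\<lambda>\<sigma>. if b (fst \<sigma>) then ert C1 f \<sigma> else ert C2 f \<sigma>)"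
| "ert (Seq C1 C2) f = ert C1 (ert C2 f)"
| "ert (While b C) f = lfp (\<lambda>g \<sigma>. if b (fst \<sigma>) then ert C g \<sigma> else f \<sigma>)"

text \<open>Least fixed point in the complete lattice A_pi = {X. -pi \<le> X} (Knaster-Tarski).\<close>
definition lfpA :: "('v state \<Rightarrow> real) \<Rightarrow> ('v art \<Rightarrow> 'v art) \<Rightarrow> 'v art" where
  "lfpA \<pi> F = Inf {Y. (\<forall>\<sigma>. - ereal (\<pi> \<sigma>) \<le> Y \<sigma>) \<and> F Y \<le> Y}"

definition lift_atomic :: "('v state \<Rightarrow> real) \<Rightarrow> ('v rt \<Rightarrow> 'v rt) \<Rightarrow> 'v art \<Rightarrow> 'v art" where
  "lift_atomic \<pi> T X = (\<lambda>\<sigma>. enn2ereal (T (\<lambda>\<sigma>'. e2ennreal (X \<sigma>' + ereal (\<pi> \<sigma>'))) \<sigma>)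
                              - ereal (\<pi> \<sigma>))"

primrec aert :: "('v state \<Rightarrow> real) \<Rightarrow> 'v prog \<Rightarrow> 'v art \<Rightarrow> 'v art" where
  "aert \<pi> (Tick e) X = (\<lambda>\<sigma>. ereal (real (e (fst \<sigma>))) + X \<sigma>)"
| "aert \<pi> (Assign x e) X = lift_atomic \<pi> (ert (Assign x e)) X"
| "aert \<pi> (Alloc x e) X = lift_atomic \<pi> (ert (Alloc x e)) X"
| "aert \<pi> (Store e e') X = lift_atomic \<pi> (ert (Store e e')) X"
| "aert \<pi> (Load x e) X = lift_atomic \<pi> (ert (Load x e)) X"
| "aert \<pi> (Free e) X = lift_atomic \<pi> (ert (Free e)) X"
| "aert \<pi> (PChoice C1 p C2) X = (\<lambda>\<sigma>. ereal (real_of_rat (p (fst \<sigma>))) * aert \<pi> C1 X \<sigma>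
                                  + ereal (1 - real_of_rat (p (fst \<sigma>))) * aert \<pi> C2 X \<sigma>)"
| "aert \<pi> (If b C1 C2) X = (\<lambda>\<sigma>. if b (fst \<sigma>) then aert \<pi> C1 X \<sigma> else aert \<pi> C2 X \<sigma>)"
| "aert \<pi> (Seq C1 C2) X = aert \<pi> C1 (aert \<pi> C2 X)"
| "aert \<pi> (While b C) X = lfpA \<pi> (\<lambda>Y \<sigma>. if b (fst \<sigma>) then aert \<pi> C Y \<sigma> else X \<sigma>)"

end

theory Submission
  imports Defs
begin

lemma INF_add_c_le:
  fixes f :: "'a \<Rightarrow> ennreal"
  shows "(INF i\<in>I. f i + c) \<le> (INF i\<in>I. f i) + c"
proof (cases "I = {}")
  case True then show ?thesis by simp
next
  case False
  have "(INF i\<in>I. f i) + c = (INF x\<in>f`I. x + c)"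
    using continuous_at_Inf_mono[of "\<lambda>x. x + c" "f`I"]
    using continuous_add[of "at_right (Inf (f`I))", of "\<lambda>x. x" "\<lambda>x. c"] False
    by (auto simp: mono_def image_comp)
  then show ?thesis by (simp add: image_comp)
qed

lemma tsub_mono1: "a \<le> a' \<Longrightarrow> tsub a b \<le> tsub a' b"
  unfolding tsub_def by (auto intro: ennreal_minus_mono simp: top_unique)

lemma tsub_plus: "tsub (a + c) b \<le> tsub a b + c"
proof (cases "b = top")
  case True then show ?thesis by (simp add: tsub_def)
next
  case False
  show ?thesis
  proof (cases "a = top \<or> c = top")
    case True then show ?thesis using False by (auto simp: tsub_def)
  next
    case nt: False
    then have "a + c \<noteq> top" by simp
    then show ?thesis using False nt by (simp add: tsub_def) (metis add.commute add_diff_le_ennreal)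
  qed
qed

lemma sepsum_mono2: "f \<le> f' \<Longrightarrow> sepsum g f \<le> sepsum g f'"
  unfolding sepsum_def le_fun_def by (auto intro!: INF_mono' add_left_mono)

lemma sepsum_const: "sepsum g (\<lambda>\<sigma>. f \<sigma> + c) \<le> (\<lambda>\<sigma>. sepsum g f \<sigma> + c)"
proof (rule le_funI, clarify)
  fix s h
  let ?P = "{(h1, h2). hdisj h1 h2 \<and> hunion h1 h2 = h}"
  have "sepsum g (\<lambda>\<sigma>. f \<sigma> + c) (s, h) = (INF p\<in>?P. (g (s, fst p) + f (s, snd p)) + c)"
    unfolding sepsum_def by (simp add: add.assoc)
  also have "\<dots> \<le> (INF p\<in>?P. g (s, fst p) + f (s, snd p)) + c" by (rule INF_add_c_le)
  also have "\<dots> = sepsum g f (s, h) + c" unfolding sepsum_def by simp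
  finally show "sepsum g (\<lambda>\<sigma>. f \<sigma> + c) (s, h) \<le> sepsum g f (s, h) + c" .
qed

lemma sepimp_mono2: "f \<le> f' \<Longrightarrow> sepimp g f \<le> sepimp g f'"
  unfolding sepimp_def le_fun_def by (auto intro!: SUP_mono' tsub_mono1)

lemma sepimp_const: "sepimp g (\<lambda>\<sigma>. f \<sigma> + c) \<le> (\<lambda>\<sigma>. sepimp g f \<sigma> + c)"
proof (rule le_funI, clarify)
  fix s h
  show "sepimp g (\<lambda>\<sigma>. f \<sigma> + c) (s, h) \<le> sepimp g f (s, h) + c"
    unfolding sepimp_def
  proof (simp, rule SUP_least)
    fix h' assume "h' \<in> {h'. hdisj h' h}"
    then have "tsub (f (s, hunion h h')) (g (s, h')) \<le> (SUP h'\<in>{h'. hdisj h' h}. tsub (f (s, hunion h h')) (g (s, h')))"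
      by (rule SUP_upper)
    then show "tsub (f (s, hunion h h') + c) (g (s, h')) \<le> (SUP h'\<in>{h'. hdisj h' h}. tsub (f (s, hunion h h')) (g (s, h'))) + c"
      by (meson add_right_mono order_trans tsub_plus)
  qed
qed

lemma e2_plus: "0 \<le> a \<Longrightarrow> e2ennreal (a + enn2ereal c) = e2ennreal a + c"
proof -
  assume "0 \<le> a"
  then have "a = enn2ereal (e2ennreal a)" by (simp add: enn2ereal_e2ennreal)
  then have "a + enn2ereal c = enn2ereal (e2ennreal a + c)" by (simp add: plus_ennreal.rep_eq)
  then show ?thesis by simp
qed

lemma ereal_rearr: "0 \<le> (a::ereal) \<Longrightarrow> 0 \<le> b \<Longrightarrow> a + b - ereal p = (a - ereal p) + b"
  by (cases a; cases b) auto

lemma lift_mono: "mono T \<Longrightarrow> X \<le> Y \<Longrightarrow> lift_atomic \<pi> T X \<le> lift_atomic \<pi> T Y"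
  unfolding lift_atomic_def
proof (rule le_funI)
  fix \<sigma> assume m: "mono T" and XY: "X \<le> Y"
  have "(\<lambda>\<sigma>'. e2ennreal (X \<sigma>' + ereal (\<pi> \<sigma>'))) \<le> (\<lambda>\<sigma>'. e2ennreal (Y \<sigma>' + ereal (\<pi> \<sigma>')))"
    using XY by (auto simp: le_fun_def intro!: e2ennreal_mono add_right_mono)
  then have "T (\<lambda>\<sigma>'. e2ennreal (X \<sigma>' + ereal (\<pi> \<sigma>'))) \<sigma> \<le> T (\<lambda>\<sigma>'. e2ennreal (Y \<sigma>' + ereal (\<pi> \<sigma>'))) \<sigma>"
    by (rule le_funD[OF monoD[OF m]])
  then have "enn2ereal (T (\<lambda>\<sigma>'. e2ennreal (X \<sigma>' + ereal (\<pi> \<sigma>'))) \<sigma>) \<le> enn2ereal (T (\<lambda>\<sigma>'. e2ennreal (Y \<sigma>' + ereal (\<pi> \<sigma>'))) \<sigma>)"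
    by (simp only: less_eq_ennreal.rep_eq)
  then show "enn2ereal (T (\<lambda>\<sigma>'. e2ennreal (X \<sigma>' + ereal (\<pi> \<sigma>'))) \<sigma>) - ereal (\<pi> \<sigma>)
       \<le> enn2ereal (T (\<lambda>\<sigma>'. e2ennreal (Y \<sigma>' + ereal (\<pi> \<sigma>'))) \<sigma>) - ereal (\<pi> \<sigma>)"
    by (rule ereal_minus_mono) (rule order_refl)
qed

lemma lift_const:
  assumes m: "mono T" and tc: "\<And>f. T (\<lambda>\<sigma>. f \<sigma> + c) \<le> (\<lambda>\<sigma>. T f \<sigma> + c)"
    and XA: "\<forall>\<sigma>. - ereal (\<pi> \<sigma>) \<le> X \<sigma>"
  shows "lift_atomic \<pi> T (\<lambda>\<sigma>. X \<sigma> + enn2ereal c) \<le> (\<lambda>\<sigma>. lift_atomic \<pi> T X \<sigma> + enn2ereal c)"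
proof (rule le_funI)
  fix \<sigma>
  define f where "f = (\<lambda>\<sigma>'. e2ennreal (X \<sigma>' + ereal (\<pi> \<sigma>')))"
  have eq: "(\<lambda>\<sigma>'. e2ennreal (X \<sigma>' + enn2ereal c + ereal (\<pi> \<sigma>'))) = (\<lambda>\<sigma>'. f \<sigma>' + c)"
  proof
    fix \<sigma>'
    have "0 \<le> X \<sigma>' + ereal (\<pi> \<sigma>')" using XA[rule_format, of \<sigma>']
      by (cases "X \<sigma>'") auto
    then show "e2ennreal (X \<sigma>' + enn2ereal c + ereal (\<pi> \<sigma>')) = f \<sigma>' + c"
      unfolding f_def using e2_plus by (metis add.assoc add.commute)
  qed
  have "T (\<lambda>\<sigma>'. f \<sigma>' + c) \<sigma> \<le> T f \<sigma> + c" using le_funD[OF tc[of f]] .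
  then have "enn2ereal (T (\<lambda>\<sigma>'. f \<sigma>' + c) \<sigma>) \<le> enn2ereal (T f \<sigma>) + enn2ereal c"
    by (simp add: less_eq_ennreal.rep_eq plus_ennreal.rep_eq)
  then have "enn2ereal (T (\<lambda>\<sigma>'. f \<sigma>' + c) \<sigma>) - ereal (\<pi> \<sigma>) \<le> enn2ereal (T f \<sigma>) + enn2ereal c - ereal (\<pi> \<sigma>)"
    by (intro ereal_minus_mono) auto
  also have "\<dots> = (enn2ereal (T f \<sigma>) - ereal (\<pi> \<sigma>)) + enn2ereal c"
    by (rule ereal_rearr) auto
  finally show "lift_atomic \<pi> T (\<lambda>\<sigma>. X \<sigma> + enn2ereal c) \<sigma> \<le> lift_atomic \<pi> T X \<sigma> + enn2ereal c"
    unfolding lift_atomic_def eq f_def by simp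
qed



lemma ert_mono_Tick: "mono (ert (Tick e))"
  by (auto intro!: monoI sepsum_mono2)
lemma ert_mono_Assign: "mono (ert (Assign x e))"
  by (auto intro!: monoI simp: le_fun_def)
lemma ert_mono_Alloc: "mono (ert (Alloc x e))"
proof (rule monoI, rule le_funI, clarify)
  fix f g :: "'a rt" and s h assume fg: "f \<le> g"
  show "ert (Alloc x e) f (s, h) \<le> ert (Alloc x e) g (s, h)"
    using fg by (auto intro!: SUP_mono' le_funD[OF sepimp_mono2] simp: le_fun_def)
qed
lemma ert_mono_Store: "mono (ert (Store e e'))"
  by (auto intro!: monoI sepsum_mono2 sepimp_mono2)
lemma ert_mono_Free: "mono (ert (Free e))"
  by (auto intro!: monoI sepsum_mono2)
lemma ert_mono_Load: "mono (ert (Load x e))"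
proof (rule monoI, rule le_funI, clarify)
  fix f g :: "'a rt" and s h assume fg: "f \<le> g"
  show "ert (Load x e) f (s, h) \<le> ert (Load x e) g (s, h)"
    using fg by (auto intro!: INF_mono' le_funD[OF sepsum_mono2] sepimp_mono2 simp: le_fun_def)
qed

lemma ert_const_Tick: "ert (Tick e) (\<lambda>\<sigma>. f \<sigma> + c) \<le> (\<lambda>\<sigma>. ert (Tick e) f \<sigma> + c)"
  by (simp add: sepsum_const)
lemma ert_const_Assign: "ert (Assign x e) (\<lambda>\<sigma>. f \<sigma> + c) \<le> (\<lambda>\<sigma>. ert (Assign x e) f \<sigma> + c)"
  by (auto simp: le_fun_def)
lemma ert_const_Free: "ert (Free e) (\<lambda>\<sigma>. f \<sigma> + c) \<le> (\<lambda>\<sigma>. ert (Free e) f \<sigma> + c)"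
  by (simp add: sepsum_const)
lemma ert_const_Store: "ert (Store e e') (\<lambda>\<sigma>. f \<sigma> + c) \<le> (\<lambda>\<sigma>. ert (Store e e') f \<sigma> + c)"
  by (simp, rule order_trans[OF sepsum_mono2[OF sepimp_const] sepsum_const])
lemma ert_const_Alloc: "ert (Alloc x e) (\<lambda>\<sigma>. f \<sigma> + c) \<le> (\<lambda>\<sigma>. ert (Alloc x e) f \<sigma> + c)"
proof (rule le_funI, clarify)
  fix s h
  have "\<And>v. (\<lambda>(s', h'). f (s'(x := v), h') + c) = (\<lambda>\<sigma>. (\<lambda>(s', h'). f (s'(x := v), h')) \<sigma> + c)"
    by auto
  then have "ert (Alloc x e) (\<lambda>\<sigma>. f \<sigma> + c) (s, h) = (SUP v. sepimp (bigsep (e s) (\<lambda>i. ptv (v + i - 1) 0))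
        (\<lambda>\<sigma>. (\<lambda>(s', h'). f (s'(x := v), h')) \<sigma> + c) (s, h))" by simp
  also have "\<dots> \<le> (SUP v. sepimp (bigsep (e s) (\<lambda>i. ptv (v + i - 1) 0))
        (\<lambda>(s', h'). f (s'(x := v), h')) (s, h) + c)"
    by (intro SUP_mono' le_funD[OF sepimp_const])
  also have "\<dots> \<le> ert (Alloc x e) f (s, h) + c"
    by (simp, rule SUP_least, rule add_right_mono, rule SUP_upper, simp)
  finally show "ert (Alloc x e) (\<lambda>\<sigma>. f \<sigma> + c) (s, h) \<le> ert (Alloc x e) f (s, h) + c" .
qed
lemma ert_const_Load: "ert (Load x e) (\<lambda>\<sigma>. f \<sigma> + c) \<le> (\<lambda>\<sigma>. ert (Load x e) f \<sigma> + c)"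
proof (rule le_funI, clarify)
  fix s h
  let ?A = "\<lambda>v. (\<lambda>(s', h'). ptv (e s') v (s', h')) :: 'a rt"
  let ?F = "\<lambda>v. (\<lambda>(s', h'). f (s'(x := v), h'))"
  have "\<And>v. (\<lambda>(s', h'). f (s'(x := v), h') + c) = (\<lambda>\<sigma>. ?F v \<sigma> + c)"
    by auto
  then have "ert (Load x e) (\<lambda>\<sigma>. f \<sigma> + c) (s, h) = (INF v. sepsum (?A v) (sepimp (?A v) (\<lambda>\<sigma>. ?F v \<sigma> + c)) (s, h))"
    by simp
  also have "\<dots> \<le> (INF v. sepsum (?A v) (sepimp (?A v) (?F v)) (s, h) + c)"
    by (intro INF_mono' le_funD[OF order_trans[OF sepsum_mono2[OF sepimp_const] sepsum_const]])
  also have "\<dots> \<le> (INF v. sepsum (?A v) (sepimp (?A v) (?F v)) (s, h)) + c"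
    by (rule INF_add_c_le)
  also have "\<dots> = ert (Load x e) f (s, h) + c" by simp
  finally show "ert (Load x e) (\<lambda>\<sigma>. f \<sigma> + c) (s, h) \<le> ert (Load x e) f (s, h) + c" .
qed


lemma lfpA_lower: "(\<forall>\<sigma>. - ereal (\<pi> \<sigma>) \<le> Z \<sigma>) \<Longrightarrow> F Z \<le> Z \<Longrightarrow> lfpA \<pi> F \<le> Z"
  unfolding lfpA_def by (rule Inf_lower) simp

lemma lfpA_ge: "- ereal (\<pi> \<sigma>) \<le> lfpA \<pi> F \<sigma>"
  unfolding lfpA_def Inf_apply by (rule INF_greatest) blast

lemma lfpA_ge': "\<forall>\<sigma>. - ereal (\<pi> \<sigma>) \<le> lfpA \<pi> F \<sigma>"
  using lfpA_ge by blast

lemma lfpA_pre: "(\<And>X Y. X \<le> Y \<Longrightarrow> F X \<le> F Y) \<Longrightarrow> F (lfpA \<pi> F) \<le> lfpA \<pi> F"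
  unfolding lfpA_def
proof (rule Inf_greatest)
  fix Y assume m: "\<And>X Y. X \<le> Y \<Longrightarrow> F X \<le> F Y"
    and Y: "Y \<in> {Y. (\<forall>\<sigma>. - ereal (\<pi> \<sigma>) \<le> Y \<sigma>) \<and> F Y \<le> Y}"
  from Y have I: "Inf {Y. (\<forall>\<sigma>. - ereal (\<pi> \<sigma>) \<le> Y \<sigma>) \<and> F Y \<le> Y} \<le> Y" by (rule Inf_lower)
  show "F (Inf {Y. (\<forall>\<sigma>. - ereal (\<pi> \<sigma>) \<le> Y \<sigma>) \<and> F Y \<le> Y}) \<le> Y"
  proof (rule order_trans)
    show "F (Inf {Y. (\<forall>\<sigma>. - ereal (\<pi> \<sigma>) \<le> Y \<sigma>) \<and> F Y \<le> Y}) \<le> F Y" by (rule m[OF I])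
    show "F Y \<le> Y" using Y by simp
  qed
qed

lemma lfpA_mono: "(\<And>Y. F Y \<le> G Y) \<Longrightarrow> lfpA \<pi> F \<le> lfpA \<pi> G"
  unfolding lfpA_def
proof (rule Inf_superset_mono, rule subsetI)
  fix Y assume FG: "\<And>Y. F Y \<le> G Y" and "Y \<in> {Y. (\<forall>\<sigma>. - ereal (\<pi> \<sigma>) \<le> Y \<sigma>) \<and> G Y \<le> Y}"
  then show "Y \<in> {Y. (\<forall>\<sigma>. - ereal (\<pi> \<sigma>) \<le> Y \<sigma>) \<and> F Y \<le> Y}"
    using order_trans[OF FG[of Y]] by blast
qed

lemma pchoice_lower:
  assumes "0 \<le> p" "p \<le> 1" "- ereal q \<le> a" "- ereal q \<le> b"
  shows "- ereal q \<le> ereal p * a + ereal (1 - p) * b"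
proof -
  have "ereal p * (- ereal q) \<le> ereal p * a" using assms by (intro ereal_mult_left_mono) auto
  moreover have "ereal (1 - p) * (- ereal q) \<le> ereal (1 - p) * b" using assms by (intro ereal_mult_left_mono) auto
  ultimately have "ereal p * (- ereal q) + ereal (1 - p) * (- ereal q) \<le> ereal p * a + ereal (1 - p) * b"
    by (rule add_mono)
  moreover have "ereal p * (- ereal q) + ereal (1 - p) * (- ereal q) = - ereal q"
    by (simp add: algebra_simps)
  ultimately show ?thesis by simp
qed

lemma dist1: "0 \<le> p \<Longrightarrow> a \<noteq> -\<infinity> \<Longrightarrow> ereal p * (a + ereal r) = ereal p * a + ereal (p*r)"
  by (cases a) (auto simp: ring_distribs)
lemma nm: "0 \<le> p \<Longrightarrow> a \<noteq> -\<infinity> \<Longrightarrow> ereal p * a \<noteq> -\<infinity>"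
  by (cases a) auto
lemma ac4: "(x::'a::comm_monoid_add) + p + (y + q) = x + y + (p + q)" by (simp add: add_ac)
lemma pchoice_const:
  assumes "0 \<le> p" "p \<le> 1" "a \<noteq> -\<infinity>" "b \<noteq> -\<infinity>" "0 \<le> c"
  shows "ereal p * (a + c) + ereal (1 - p) * (b + c) \<le> ereal p * a + ereal (1 - p) * b + c"
proof (cases c)
  case (real r)
  have e1: "ereal p * (a + c) = ereal p * a + ereal (p*r)" using assms real by (simp add: dist1)
  have e2: "ereal (1-p) * (b + c) = ereal (1-p) * b + ereal ((1-p)*r)" using assms real by (simp add: dist1)
  have e3: "ereal (p*r) + ereal ((1-p)*r) = c" using real by (simp add: algebra_simps)
  have "ereal p * (a + c) + ereal (1 - p) * (b + c) = ereal p * a + ereal (1 - p) * b + (ereal (p*r) + ereal ((1-p)*r))"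
    unfolding e1 e2 by (rule ac4)
  then show ?thesis unfolding e3 by simp
next
  case PInf
  have "ereal p * a + ereal (1 - p) * b \<noteq> -\<infinity>" using assms nm[of p a] nm[of "1-p" b] by simp
  then show ?thesis using PInf by simp
next
  case MInf then show ?thesis using assms by simp
qed

lemma atom_lower: "- ereal q \<le> enn2ereal x - ereal q"
proof -
  have "0 - ereal q \<le> enn2ereal x - ereal q" by (rule ereal_minus_mono) auto
  then show ?thesis by simp
qed

lemma lift_lower: "\<forall>\<sigma>. - ereal (\<pi> \<sigma>) \<le> lift_atomic \<pi> T X \<sigma>"
  unfolding lift_atomic_def using atom_lower by blast

lemma rat01: "0 \<le> p \<Longrightarrow> p \<le> 1 \<Longrightarrow> 0 \<le> real_of_rat p \<and> real_of_rat p \<le> 1"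
  by (metis of_rat_0 of_rat_1 of_rat_less_eq)

lemma aert_lower:
  assumes "wf_prog C" "\<forall>\<sigma>. - ereal (\<pi> \<sigma>) \<le> X \<sigma>"
  shows "\<forall>\<sigma>. - ereal (\<pi> \<sigma>) \<le> aert \<pi> C X \<sigma>"
  using assms
proof (induction C arbitrary: X)
  case (Tick e)
  show ?case
  proof
    fix \<sigma> :: "'a state"
    have "- ereal (\<pi> \<sigma>) \<le> X \<sigma>" using Tick.prems(2) by blast
    then show "- ereal (\<pi> \<sigma>) \<le> aert \<pi> (Tick e) X \<sigma>"
      by (simp only: aert.simps, intro add_increasing) auto
  qed
next
  case (PChoice C1 p C2)
  show ?case
  proof
    fix \<sigma> :: "'a state"
    have p: "0 \<le> real_of_rat (p (fst \<sigma>)) \<and> real_of_rat (p (fst \<sigma>)) \<le> 1"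
      using PChoice.prems(1) rat01[of "p (fst \<sigma>)"] by simp
    have h: "\<forall>\<sigma>. - ereal (\<pi> \<sigma>) \<le> aert \<pi> C1 X \<sigma>" "\<forall>\<sigma>. - ereal (\<pi> \<sigma>) \<le> aert \<pi> C2 X \<sigma>"
      using PChoice by auto
    have a1: "- ereal (\<pi> \<sigma>) \<le> aert \<pi> C1 X \<sigma>" using h(1) by (rule spec)
    have a2: "- ereal (\<pi> \<sigma>) \<le> aert \<pi> C2 X \<sigma>" using h(2) by (rule spec)
    show "- ereal (\<pi> \<sigma>) \<le> aert \<pi> (PChoice C1 p C2) X \<sigma>"
      using pchoice_lower[OF conjunct1[OF p] conjunct2[OF p] a1 a2] by (simp only: aert.simps)
  qed
next
  case (If b C1 C2)
  have h1: "\<forall>\<sigma>. - ereal (\<pi> \<sigma>) \<le> aert \<pi> C1 X \<sigma>" "\<forall>\<sigma>. - ereal (\<pi> \<sigma>) \<le> aert \<pi> C2 X \<sigma>"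
    using If by auto
  show ?case
  proof
    fix \<sigma> :: "'a state"
    have "- ereal (\<pi> \<sigma>) \<le> aert \<pi> C1 X \<sigma>" "- ereal (\<pi> \<sigma>) \<le> aert \<pi> C2 X \<sigma>"
      using h1(1)[THEN spec, of \<sigma>] h1(2)[THEN spec, of \<sigma>] by auto
    then show "- ereal (\<pi> \<sigma>) \<le> aert \<pi> (If b C1 C2) X \<sigma>" by simp
  qed
next
  case (Seq C1 C2)
  have "\<forall>\<sigma>. - ereal (\<pi> \<sigma>) \<le> aert \<pi> C2 X \<sigma>" using Seq.IH(2) Seq.prems by simp
  then have "\<forall>\<sigma>. - ereal (\<pi> \<sigma>) \<le> aert \<pi> C1 (aert \<pi> C2 X) \<sigma>"
    using Seq.IH(1) Seq.prems(1) by simp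
  then show ?case by simp
next
  case (While b C)
  show ?case unfolding aert.simps by (rule lfpA_ge')
qed (unfold aert.simps, (rule lift_lower)+)


lemma aert_mono:
  assumes "wf_prog C" "X \<le> Y"
  shows "aert \<pi> C X \<le> aert \<pi> C Y"
  using assms
proof (induction C arbitrary: X Y)
  case (Tick e)
  show ?case
  proof (rule le_funI)
    fix \<sigma> :: "'a state"
    show "aert \<pi> (Tick e) X \<sigma> \<le> aert \<pi> (Tick e) Y \<sigma>"
      using le_funD[OF Tick.prems(2)] by (simp add: add_left_mono)
  qed
next
  case (Assign x e) then show ?case by (simp only: aert.simps) (rule lift_mono[OF ert_mono_Assign])
next
  case (Alloc x e) then show ?case by (simp only: aert.simps) (rule lift_mono[OF ert_mono_Alloc])
next
  case (Store x e) then show ?case by (simp only: aert.simps) (rule lift_mono[OF ert_mono_Store])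
next
  case (Load x e) then show ?case by (simp only: aert.simps) (rule lift_mono[OF ert_mono_Load])
next
  case (Free e) then show ?case by (simp only: aert.simps) (rule lift_mono[OF ert_mono_Free])
next
  case (PChoice C1 p C2)
  have m1: "aert \<pi> C1 X \<le> aert \<pi> C1 Y" and m2: "aert \<pi> C2 X \<le> aert \<pi> C2 Y"
    using PChoice by auto
  show ?case
  proof (rule le_funI)
    fix \<sigma> :: "'a state"
    have p: "0 \<le> real_of_rat (p (fst \<sigma>)) \<and> real_of_rat (p (fst \<sigma>)) \<le> 1"
      using PChoice.prems(1) rat01[of "p (fst \<sigma>)"] by simp
    show "aert \<pi> (PChoice C1 p C2) X \<sigma> \<le> aert \<pi> (PChoice C1 p C2) Y \<sigma>"
      unfolding aert.simps
      by (intro add_mono ereal_mult_left_mono le_funD[OF m1] le_funD[OF m2]) (use p in auto)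
  qed
next
  case (If b C1 C2)
  have m1: "aert \<pi> C1 X \<le> aert \<pi> C1 Y" and m2: "aert \<pi> C2 X \<le> aert \<pi> C2 Y"
    using If by auto
  show ?case
    by (rule le_funI) (simp add: le_funD[OF m1] le_funD[OF m2])
next
  case (Seq C1 C2)
  have "aert \<pi> C2 X \<le> aert \<pi> C2 Y" using Seq by auto
  then have "aert \<pi> C1 (aert \<pi> C2 X) \<le> aert \<pi> C1 (aert \<pi> C2 Y)" using Seq by auto
  then show ?case by simp
next
  case (While b C)
  show ?case unfolding aert.simps
  proof (rule lfpA_mono, rule le_funI)
    fix Z and \<sigma> :: "'a state"
    show "(if b (fst \<sigma>) then aert \<pi> C Z \<sigma> else X \<sigma>) \<le> (if b (fst \<sigma>) then aert \<pi> C Z \<sigma> else Y \<sigma>)"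
      using le_funD[OF While.prems(2)] by simp
  qed
qed

lemma main:
  assumes "wf_prog C" "\<forall>\<sigma>. - ereal (\<pi> \<sigma>) \<le> X \<sigma>"
  shows "aert \<pi> C (\<lambda>\<sigma>. X \<sigma> + enn2ereal c) \<le> (\<lambda>\<sigma>. aert \<pi> C X \<sigma> + enn2ereal c)"
  using assms
proof (induction C arbitrary: X)
  case (Tick e)
  show ?case by (rule le_funI) (simp add: add.assoc)
next
  case (Assign x e) then show ?case
    by (simp only: aert.simps) (rule lift_const[OF ert_mono_Assign ert_const_Assign])
next
  case (Alloc x e) then show ?case
    by (simp only: aert.simps) (rule lift_const[OF ert_mono_Alloc ert_const_Alloc])
next
  case (Store x e) then show ?case
    by (simp only: aert.simps) (rule lift_const[OF ert_mono_Store ert_const_Store])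
next
  case (Load x e) then show ?case
    by (simp only: aert.simps) (rule lift_const[OF ert_mono_Load ert_const_Load])
next
  case (Free e) then show ?case
    by (simp only: aert.simps) (rule lift_const[OF ert_mono_Free ert_const_Free])
next
  case (PChoice C1 p C2)
  have m1: "aert \<pi> C1 (\<lambda>\<sigma>. X \<sigma> + enn2ereal c) \<le> (\<lambda>\<sigma>. aert \<pi> C1 X \<sigma> + enn2ereal c)"
   and m2: "aert \<pi> C2 (\<lambda>\<sigma>. X \<sigma> + enn2ereal c) \<le> (\<lambda>\<sigma>. aert \<pi> C2 X \<sigma> + enn2ereal c)"
    using PChoice by auto
  have l1: "\<forall>\<sigma>. - ereal (\<pi> \<sigma>) \<le> aert \<pi> C1 X \<sigma>" and l2: "\<forall>\<sigma>. - ereal (\<pi> \<sigma>) \<le> aert \<pi> C2 X \<sigma>"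
    using aert_lower[OF _ PChoice.prems(2)] PChoice.prems(1) by auto
  show ?case
  proof (rule le_funI)
    fix \<sigma> :: "'a state"
    have p: "0 \<le> real_of_rat (p (fst \<sigma>)) \<and> real_of_rat (p (fst \<sigma>)) \<le> 1"
      using PChoice.prems(1) rat01[of "p (fst \<sigma>)"] by simp
    have a1: "aert \<pi> C1 X \<sigma> \<noteq> -\<infinity>" using l1[THEN spec, of \<sigma>] by auto
    have a2: "aert \<pi> C2 X \<sigma> \<noteq> -\<infinity>" using l2[THEN spec, of \<sigma>] by auto
    have "aert \<pi> (PChoice C1 p C2) (\<lambda>\<sigma>. X \<sigma> + enn2ereal c) \<sigma>
       \<le> ereal (real_of_rat (p (fst \<sigma>))) * (aert \<pi> C1 X \<sigma> + enn2ereal c)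
         + ereal (1 - real_of_rat (p (fst \<sigma>))) * (aert \<pi> C2 X \<sigma> + enn2ereal c)"
      unfolding aert.simps
      by (intro add_mono ereal_mult_left_mono le_funD[OF m1, of \<sigma>, simplified] le_funD[OF m2, of \<sigma>, simplified]) (use p in auto)
    also have "\<dots> \<le> aert \<pi> (PChoice C1 p C2) X \<sigma> + enn2ereal c"
      unfolding aert.simps
      by (rule pchoice_const) (use p a1 a2 in auto)
    finally show "aert \<pi> (PChoice C1 p C2) (\<lambda>\<sigma>. X \<sigma> + enn2ereal c) \<sigma> \<le> aert \<pi> (PChoice C1 p C2) X \<sigma> + enn2ereal c" .
  qed
next
  case (If b C1 C2)
  have m1: "aert \<pi> C1 (\<lambda>\<sigma>. X \<sigma> + enn2ereal c) \<le> (\<lambda>\<sigma>. aert \<pi> C1 X \<sigma> + enn2ereal c)"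
   and m2: "aert \<pi> C2 (\<lambda>\<sigma>. X \<sigma> + enn2ereal c) \<le> (\<lambda>\<sigma>. aert \<pi> C2 X \<sigma> + enn2ereal c)"
    using If by auto
  show ?case
    by (rule le_funI) (simp add: le_funD[OF m1, simplified] le_funD[OF m2, simplified])
next
  case (Seq C1 C2)
  have "aert \<pi> C2 (\<lambda>\<sigma>. X \<sigma> + enn2ereal c) \<le> (\<lambda>\<sigma>. aert \<pi> C2 X \<sigma> + enn2ereal c)"
    using Seq by auto
  then have "aert \<pi> C1 (aert \<pi> C2 (\<lambda>\<sigma>. X \<sigma> + enn2ereal c)) \<le> aert \<pi> C1 (\<lambda>\<sigma>. aert \<pi> C2 X \<sigma> + enn2ereal c)"
    using Seq.prems(1) aert_mono by auto
  also have "\<dots> \<le> (\<lambda>\<sigma>. aert \<pi> C1 (aert \<pi> C2 X) \<sigma> + enn2ereal c)"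
  proof -
    have w: "wf_prog C1" "wf_prog C2" using Seq.prems(1) by auto
    show ?thesis by (rule Seq.IH(1)[OF w(1) aert_lower[OF w(2) Seq.prems(2)]])
  qed
  finally show ?case by simp
next
  case (While b C)
  define F where "F = (\<lambda>Y \<sigma>. if b (fst \<sigma>) then aert \<pi> C Y \<sigma> else X \<sigma>)"
  define G where "G = (\<lambda>Y \<sigma>. if b (fst \<sigma>) then aert \<pi> C Y \<sigma> else X \<sigma> + enn2ereal c)"
  define L where "L = lfpA \<pi> F"
  have wfC: "wf_prog C" using While.prems(1) by simp
  have Fm: "\<And>Y Z. Y \<le> Z \<Longrightarrow> F Y \<le> F Z"
    unfolding F_def using aert_mono[OF wfC] by (auto simp: le_fun_def)
  have FL: "F L \<le> L" unfolding L_def by (rule lfpA_pre[OF Fm])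
  have Llow: "\<forall>\<sigma>. - ereal (\<pi> \<sigma>) \<le> L \<sigma>" unfolding L_def by (rule lfpA_ge')
  have IHL: "aert \<pi> C (\<lambda>\<sigma>. L \<sigma> + enn2ereal c) \<le> (\<lambda>\<sigma>. aert \<pi> C L \<sigma> + enn2ereal c)"
    using While.IH[OF wfC Llow] .
  have Zlow: "\<forall>\<sigma>. - ereal (\<pi> \<sigma>) \<le> L \<sigma> + enn2ereal c"
    using Llow by (auto intro: add_increasing2)
  have GZ: "G (\<lambda>\<sigma>. L \<sigma> + enn2ereal c) \<le> (\<lambda>\<sigma>. L \<sigma> + enn2ereal c)"
  proof (rule le_funI)
    fix \<sigma> :: "'a state"
    have "G (\<lambda>\<sigma>. L \<sigma> + enn2ereal c) \<sigma> \<le> F L \<sigma> + enn2ereal c"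
      unfolding G_def F_def using le_funD[OF IHL, of \<sigma>] by simp
    also have "\<dots> \<le> L \<sigma> + enn2ereal c" using le_funD[OF FL, of \<sigma>] by (rule add_right_mono)
    finally show "G (\<lambda>\<sigma>. L \<sigma> + enn2ereal c) \<sigma> \<le> L \<sigma> + enn2ereal c" .
  qed
  have "lfpA \<pi> G \<le> (\<lambda>\<sigma>. L \<sigma> + enn2ereal c)" by (rule lfpA_lower[where Z="\<lambda>\<sigma>. L \<sigma> + enn2ereal c" and \<pi>=\<pi> and F=G, OF Zlow GZ])
  then show ?case unfolding G_def L_def F_def by simp
qed

theorem mainTheorem4:
  fixes \<pi> :: "('v::finite) state \<Rightarrow> real"
    and C :: "'v prog"
    and X :: "'v state \<Rightarrow> ereal"
    and c :: ennreal
  assumes pot: "\<forall>\<sigma>. 0 \<le> \<pi> \<sigma>"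
    and wf: "wf_prog C"
    and XA: "\<forall>\<sigma>. - ereal (\<pi> \<sigma>) \<le> X \<sigma>"
  shows "aert \<pi> C (\<lambda>\<sigma>. X \<sigma> + enn2ereal c) \<le> (\<lambda>\<sigma>. aert \<pi> C X \<sigma> + enn2ereal c)"
  by (rule main[OF wf XA])

end
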